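(* Let $\alpha=(a_1,\dots,a_w)$ have $m$ nonempty horizontal lists. (1) Let $a_i,a_j\in\mathbb{L}^t_\alpha$ with $a_i<a_j$. Then for every $1\le k<t$, the items $lm^k_\alpha(a_i)$, $lm^k_\alpha(a_j)$, $un^k_\alpha(a_i)$ and $un^k_\alpha(a_j)$ all lie in $\mathbb{L}^{t-k}_\alpha$. Moreover, $lm^k_\alpha(a_i)\le lm^k_\alpha(a_j)$ and $un^k_\alpha(a_i)\le un^k_\alpha(a_j)$ as values. (2) Let $a_i\in\mathbb{L}^t_\alpha$, and let $\beta=(a_{i_{t-1}},\dots,a_{i_1},a_{i_0})$, with $a_{i_0}=a_i$, be any increasing subsequence of $\alpha$ of length $t$ ending at $a_i$. Then for every $0\le k\le t-1$, the items $lm^k_\alpha(a_i)$, $a_{i_k}$ and $un^k_\alpha(a_i)$ lie in $\mathbb{L}^{t-k}_\alpha$, and $lm^k_\alpha(a_i)\ge a_{i_k}\ge un^k_\alpha(a_i)$. (3) Let $a_i\in\mathbb{L}^m_\alpha$. Among all longest increasing subsequences of $\alpha$ ending at $a_i$, the sequence $(lm^{m-1}_\alpha(a_i),\dots,lm^0_\alpha(a_i))$ has maximum weight and minimum gap. The sequence $(un^{m-1}_\alpha(a_i),\dots,un^0_\alpha(a_i))$ has minimum weight and maximum gap. (4) Let $a^m_h$ and $a^m_t$ be the first and last items of $\mathbb{L}^m_\alpha$. Then $(lm^{m-1}_\alpha(a^m_h),\dots,lm^0_\alpha(a^m_h))$ is a longest increasing subsequence of $\alpha$ of maximum weight. Also,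 $(un^{m-1}_\alpha(a^m_t),\dots,un^0_\alpha(a^m_t))$ is a longest increasing subsequence of $\alpha$ of minimum weight.
   Context: Let $\alpha=(a_1,\dots,a_w)$ be a finite sequence of real numbers, with items identified by their positions. Increasing subsequences are non-strict: indices strictly increase and values satisfy $\le$. $a_j$ is compatible with $a_i$ if $j<i$ and $a_j\le a_i$. $RL_\alpha(a)$ is the maximum length of an increasing subsequence ending at $a$. $a_j$ is a predecessor of $a_i$ if it is compatible with $a_i$ and $RL_\alpha(a_j)=RL_\alpha(a_i)-1$. The horizontal list $\mathbb{L}^t_\alpha$ is the list of items of rising length $t$, ordered by position; $m$ is the number of nonempty lists, which equals the length of a longest increasing subsequence. The up neighbor $un_\alpha(a_i)$ is the item $a_j$ with the largest $j<i$ and $RL_\alpha(a_j)=RL_\alpha(a_i)-1$. The leftmost child $lm_\alpha(a_i)$ is the predecessor of $a_i$ with smallest position. Further, $un^0_\alpha(a)=lm^0_\alpha(a)=a$, $un^k_\alpha=un_\alpha\circ un^{k-1}_\alpha$, and $lm^k_\alpha=lm_\alpha\circ lm^{k-1}_\alpha$. For an increasing subsequence $s$, its weight is the sum of its items, and its gap is (last item) $-$ (first item). *)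

theory Defs
  imports Complex_Main
begin

(* The sequence alpha = (a_1,...,a_w) is a list xs :: real list; items are
   identified by their positions, here 0-based indices 0..<length xs.
   An increasing subsequence is represented by its list of positions. *)

definition is_inc :: "real list \<Rightarrow> nat list \<Rightarrow> bool" where
  "is_inc xs ps \<longleftrightarrow> sorted_wrt (<) ps \<and> (\<forall>p\<in>set ps. p < length xs)
     \<and> sorted (map (\<lambda>p. xs ! p) ps)"

definition is_lis :: "real list \<Rightarrow> nat list \<Rightarrow> bool" where
  "is_lis xs ps \<longleftrightarrow> is_inc xs ps \<and> (\<forall>qs. is_inc xs qs \<longrightarrow> length qs \<le> length ps)"

definition RL :: "real list \<Rightarrow> nat \<Rightarrow> nat" where
  "RL xs i = Max {length ps | ps. is_inc xs ps \<and> ps \<noteq> [] \<and> last ps = i}"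

definition compatible :: "real list \<Rightarrow> nat \<Rightarrow> nat \<Rightarrow> bool" where
  "compatible xs j i \<longleftrightarrow> j < i \<and> xs ! j \<le> xs ! i"

definition pred :: "real list \<Rightarrow> nat \<Rightarrow> nat \<Rightarrow> bool" where
  "pred xs j i \<longleftrightarrow> compatible xs j i \<and> RL xs j = RL xs i - 1"

(* horizontal list L^t_alpha, as the set of positions (ordered by position) *)
definition HL :: "real list \<Rightarrow> nat \<Rightarrow> nat set" where
  "HL xs t = {i. i < length xs \<and> RL xs i = t}"

definition num_lists :: "real list \<Rightarrow> nat" where
  "num_lists xs = card {t. HL xs t \<noteq> {}}"

definition un :: "real list \<Rightarrow> nat \<Rightarrow> nat" where
  "un xs i = (GREATEST j. j < i \<and> RL xs j = RL xs i - 1)"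

definition lm :: "real list \<Rightarrow> nat \<Rightarrow> nat" where
  "lm xs i = (LEAST j. pred xs j i)"

definition chain :: "(nat \<Rightarrow> nat) \<Rightarrow> nat \<Rightarrow> nat \<Rightarrow> nat list" where
  "chain f n i = map (\<lambda>k. (f ^^ (n - 1 - k)) i) [0..<n]"

definition weight :: "real list \<Rightarrow> nat list \<Rightarrow> real" where
  "weight xs ps = sum_list (map (\<lambda>p. xs ! p) ps)"

definition gap :: "real list \<Rightarrow> nat list \<Rightarrow> real" where
  "gap xs ps = xs ! (last ps) - xs ! (hd ps)"

end

theory Submission
  imports Defs
begin


lemma inc_nth_less: "is_inc xs ps \<Longrightarrow> r < s \<Longrightarrow> s < length ps \<Longrightarrow> ps!r < ps!s"
  by (simp add: is_inc_def sorted_wrt_iff_nth_less)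

lemma inc_nth_le: "is_inc xs ps \<Longrightarrow> r \<le> s \<Longrightarrow> s < length ps \<Longrightarrow> xs!(ps!r) \<le> xs!(ps!s)"
  unfolding is_inc_def sorted_iff_nth_mono by (metis le_less_trans length_map nth_map)

lemma inc_bound: "is_inc xs ps \<Longrightarrow> r < length ps \<Longrightarrow> ps!r < length xs"
  by (simp add: is_inc_def)

lemma inc_length: "is_inc xs ps \<Longrightarrow> length ps \<le> length xs"
proof -
  assume a: "is_inc xs ps"
  then have "distinct ps" by (simp add: is_inc_def strict_sorted_iff)
  then have "length ps = card (set ps)" by (simp add: distinct_card)
  also have "\<dots> \<le> card {..<length xs}" using a by (intro card_mono) (auto simp: is_inc_def)
  finally show ?thesis by simp
qed

lemma inc_take: "is_inc xs ps \<Longrightarrow> is_inc xs (take k ps)"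
  unfolding is_inc_def by (auto simp: take_map[symmetric] dest: in_set_takeD)

lemma inc_single: "i < length xs \<Longrightarrow> is_inc xs [i]"
  by (simp add: is_inc_def)

lemma inc_snoc:
  assumes "is_inc xs ps" "ps \<noteq> []" "last ps < i" "xs!(last ps) \<le> xs!i" "i < length xs"
  shows "is_inc xs (ps @ [i])"
proof -
  have L: "last ps = ps ! (length ps - 1)" using assms(2) by (simp add: last_conv_nth)
  have "\<forall>x\<in>set ps. x < i \<and> xs!x \<le> xs!i"
  proof
    fix x assume "x \<in> set ps"
    then obtain r where r: "r < length ps" "x = ps!r" by (auto simp: in_set_conv_nth)
    have "x \<le> last ps"
      using inc_nth_less[OF assms(1), of r "length ps - 1"] r L by (cases "r = length ps - 1") force+
    moreover have "xs!x \<le> xs!(last ps)" using inc_nth_le[OF assms(1), of r "length ps - 1"] r L by auto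
    ultimately show "x < i \<and> xs!x \<le> xs!i" using assms by auto
  qed
  then show ?thesis using assms(1,5) unfolding is_inc_def
    by (auto simp: sorted_wrt_append sorted_append)
qed

lemma RL_fin: "finite {length ps | ps. is_inc xs ps \<and> ps \<noteq> [] \<and> last ps = i}"
  by (rule finite_subset[of _ "{..length xs}"]) (auto dest: inc_length)

lemma RL_ge: "is_inc xs ps \<Longrightarrow> ps \<noteq> [] \<Longrightarrow> last ps = i \<Longrightarrow> length ps \<le> RL xs i"
  unfolding RL_def by (rule Max_ge[OF RL_fin]) auto

lemma RL_wit: "i < length xs \<Longrightarrow> \<exists>ps. is_inc xs ps \<and> ps \<noteq> [] \<and> last ps = i \<and> length ps = RL xs i"
proof -
  assume "i < length xs"
  then have "[i] \<in> {ps. is_inc xs ps \<and> ps \<noteq> [] \<and> last ps = i}" by (simp add: inc_single)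
  then have ne: "{length ps | ps. is_inc xs ps \<and> ps \<noteq> [] \<and> last ps = i} \<noteq> {}" by blast
  have "RL xs i \<in> {length ps | ps. is_inc xs ps \<and> ps \<noteq> [] \<and> last ps = i}"
    unfolding RL_def by (rule Max_in[OF RL_fin ne])
  then show ?thesis by auto
qed

lemma RL_pos: "i < length xs \<Longrightarrow> 1 \<le> RL xs i"
  using RL_ge[of xs "[i]" i] inc_single by auto

lemma RL_mono: "j < i \<Longrightarrow> xs!j \<le> xs!i \<Longrightarrow> i < length xs \<Longrightarrow> RL xs j + 1 \<le> RL xs i"
proof -
  assume a: "j < i" "xs!j \<le> xs!i" "i < length xs"
  then obtain ps where ps: "is_inc xs ps" "ps \<noteq> []" "last ps = j" "length ps = RL xs j"
    using RL_wit[of j xs] by auto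
  have "is_inc xs (ps @ [i])" using inc_snoc[OF ps(1,2)] ps a by auto
  from RL_ge[OF this] ps show ?thesis by simp
qed

lemma RL_pred_ex: "i < length xs \<Longrightarrow> 2 \<le> RL xs i \<Longrightarrow> \<exists>j<i. xs!j \<le> xs!i \<and> RL xs j = RL xs i - 1"
proof -
  assume a: "i < length xs" "2 \<le> RL xs i"
  then obtain ps where ps: "is_inc xs ps" "ps \<noteq> []" "last ps = i" "length ps = RL xs i"
    using RL_wit[of i xs] by auto
  define r where "r = length ps - 2"
  have "r+1 = length ps - 1" using ps a by (simp add: r_def)
  then have L: "i = ps ! (r+1)" using ps by (simp add: last_conv_nth)
  have rl: "r+1 < length ps" using ps a by (simp add: r_def)
  have lt: "ps!r < i" using inc_nth_less[OF ps(1), of r "r+1"] rl unfolding L by simp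
  have le: "xs!(ps!r) \<le> xs!i" using inc_nth_le[OF ps(1), of r "r+1"] rl unfolding L by simp
  have "is_inc xs (take (r+1) ps)" by (rule inc_take[OF ps(1)])
  moreover have "last (take (r+1) ps) = ps!r" using a ps
    by (simp add: r_def last_conv_nth)
  ultimately have "r + 1 \<le> RL xs (ps!r)" using RL_ge[of xs "take (r+1) ps"] a ps
    by (fastforce simp: r_def)
  moreover have "RL xs (ps!r) + 1 \<le> RL xs i" using RL_mono[OF lt le a(1)] .
  ultimately show ?thesis using lt le a ps by (intro exI[of _ "ps!r"]) (auto simp: r_def)
qed

lemma same_list: "i < length xs \<Longrightarrow> j < i \<Longrightarrow> RL xs j = RL xs i \<Longrightarrow> xs!i < xs!j"
  using RL_mono[of j i xs] by force



lemma HL_iff: "x \<in> HL xs t \<longleftrightarrow> x < length xs \<and> RL xs x = t"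
  by (simp add: HL_def)

lemma lm_props:
  assumes "x < length xs" "2 \<le> RL xs x"
  shows "lm xs x < x \<and> xs!(lm xs x) \<le> xs!x \<and> RL xs (lm xs x) = RL xs x - 1"
proof -
  have "\<exists>j. pred xs j x" using RL_pred_ex[OF assms] by (auto simp: pred_def compatible_def)
  then have "pred xs (lm xs x) x" unfolding lm_def by (rule LeastI_ex)
  then show ?thesis by (simp add: pred_def compatible_def)
qed

lemma lm_least: "j < x \<Longrightarrow> xs!j \<le> xs!x \<Longrightarrow> RL xs j = RL xs x - 1 \<Longrightarrow> lm xs x \<le> j"
  unfolding lm_def by (rule Least_le) (simp add: pred_def compatible_def)

lemma un_greatest: "j < x \<Longrightarrow> RL xs j = RL xs x - 1 \<Longrightarrow> j \<le> un xs x"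
  unfolding un_def by (rule Greatest_le_nat[where b=x]) auto

lemma un_props:
  assumes "x < length xs" "2 \<le> RL xs x"
  shows "un xs x < x \<and> xs!(un xs x) \<le> xs!x \<and> RL xs (un xs x) = RL xs x - 1"
proof -
  obtain j where j: "j < x" "xs!j \<le> xs!x" "RL xs j = RL xs x - 1" using RL_pred_ex[OF assms] by auto
  have P: "un xs x < x \<and> RL xs (un xs x) = RL xs x - 1"
    unfolding un_def by (rule GreatestI_nat[where k=j and b=x]) (use j in auto)
  have "j \<le> un xs x" using un_greatest j by blast
  moreover have "j < un xs x \<Longrightarrow> xs!(un xs x) < xs!j"
    using same_list[of "un xs x" xs j] P j assms by auto
  ultimately have "xs!(un xs x) \<le> xs!j" by (cases "j = un xs x") auto
  with P j show ?thesis by auto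
qed

lemma HL_C: "x \<in> HL xs t \<Longrightarrow> y \<in> HL xs t \<Longrightarrow> xs!x \<le> xs!y \<Longrightarrow> y \<le> x"
proof (rule ccontr)
  assume a: "x \<in> HL xs t" "y \<in> HL xs t" "xs!x \<le> xs!y" "\<not> y \<le> x"
  then have "xs!y < xs!x" using same_list[of y xs x] by (simp add: HL_iff)
  with a show False by simp
qed

lemma HL_D: "x \<in> HL xs t \<Longrightarrow> y \<in> HL xs t \<Longrightarrow> y \<le> x \<Longrightarrow> xs!x \<le> xs!y"
  using same_list[of x xs y] by (cases "y = x") (auto simp: HL_iff)

lemma lm_HL: "x \<in> HL xs t \<Longrightarrow> 2 \<le> t \<Longrightarrow> lm xs x \<in> HL xs (t - 1)"
  using lm_props[of x xs] by (auto simp: HL_iff)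

lemma un_HL: "x \<in> HL xs t \<Longrightarrow> 2 \<le> t \<Longrightarrow> un xs x \<in> HL xs (t - 1)"
  using un_props[of x xs] by (auto simp: HL_iff)

lemma lm_mono:
  assumes "x \<in> HL xs t" "y \<in> HL xs t" "2 \<le> t" "xs!x \<le> xs!y"
  shows "xs!(lm xs x) \<le> xs!(lm xs y)"
proof -
  have px: "lm xs x < x \<and> xs!(lm xs x) \<le> xs!x \<and> RL xs (lm xs x) = RL xs x - 1"
    using lm_props[of x xs] assms by (auto simp: HL_iff)
  have py: "lm xs y < y \<and> xs!(lm xs y) \<le> xs!y \<and> RL xs (lm xs y) = RL xs y - 1"
    using lm_props[of y xs] assms by (auto simp: HL_iff)
  have "lm xs y \<le> lm xs x"
  proof (rule ccontr)
    assume "\<not> ?thesis"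
    then have "lm xs x < y" using py by auto
    then have "lm xs y \<le> lm xs x" using px assms by (intro lm_least) (auto simp: HL_iff)
    with \<open>\<not> _\<close> show False by simp
  qed
  then show ?thesis using HL_D[OF lm_HL[OF assms(1,3)] lm_HL[OF assms(2,3)]] by simp
qed

lemma un_mono:
  assumes "x \<in> HL xs t" "y \<in> HL xs t" "2 \<le> t" "xs!x \<le> xs!y"
  shows "xs!(un xs x) \<le> xs!(un xs y)"
proof -
  have "y \<le> x" using HL_C[OF assms(1,2,4)] .
  have py: "un xs y < y \<and> RL xs (un xs y) = RL xs y - 1"
    using un_props[of y xs] assms by (auto simp: HL_iff)
  have "un xs y \<le> un xs x" using py \<open>y \<le> x\<close> assms by (intro un_greatest) (auto simp: HL_iff)
  then show ?thesis using HL_D[OF un_HL[OF assms(1,3)] un_HL[OF assms(2,3)]] by simp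
qed

lemma lm_E:
  assumes "q \<in> HL xs t" "x \<in> HL xs t" "2 \<le> t" "xs!q \<le> xs!x" "p < q" "xs!p \<le> xs!q" "RL xs p = t - 1"
  shows "xs!p \<le> xs!(lm xs x)"
proof -
  have "lm xs q \<le> p" using assms by (intro lm_least) (auto simp: HL_iff)
  moreover have "p \<in> HL xs (t-1)" using assms by (auto simp: HL_iff)
  ultimately have "xs!p \<le> xs!(lm xs q)" using HL_D[OF _ lm_HL[OF assms(1,3)]] by blast
  also have "\<dots> \<le> xs!(lm xs x)" using lm_mono[OF assms(1,2,3,4)] .
  finally show ?thesis .
qed

lemma un_E:
  assumes "q \<in> HL xs t" "x \<in> HL xs t" "2 \<le> t" "xs!x \<le> xs!q" "p < q" "RL xs p = t - 1"
  shows "xs!(un xs x) \<le> xs!p"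
proof -
  have "p \<le> un xs q" using assms by (intro un_greatest) (auto simp: HL_iff)
  moreover have "p \<in> HL xs (t-1)" using assms un_props[of q xs] by (auto simp: HL_iff)
  ultimately have "xs!(un xs q) \<le> xs!p" using HL_D[OF un_HL[OF assms(1,3)]] by blast
  moreover have "xs!(un xs x) \<le> xs!(un xs q)" using un_mono[OF assms(2,1,3,4)] .
  ultimately show ?thesis by simp
qed

lemma iter_HL:
  assumes "x \<in> HL xs t" "k < t"
  shows "(lm xs ^^ k) x \<in> HL xs (t - k) \<and> (un xs ^^ k) x \<in> HL xs (t - k)"
  using assms(2)
proof (induction k)
  case 0 then show ?case using assms by simp
next
  case (Suc k)
  then have t2: "2 \<le> t - k" and kt: "k < t" by simp_all
  have e: "t - Suc k = t - k - 1" by simp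
  have h: "(lm xs ^^ k) x \<in> HL xs (t - k)" "(un xs ^^ k) x \<in> HL xs (t - k)"
    using Suc.IH kt by auto
  show ?case unfolding e funpow.simps comp_def using lm_HL[OF h(1) t2] un_HL[OF h(2) t2] by simp
qed

lemma iter_mono:
  assumes "x \<in> HL xs t" "y \<in> HL xs t" "xs!x \<le> xs!y" "k < t"
  shows "xs!((lm xs ^^ k) x) \<le> xs!((lm xs ^^ k) y) \<and> xs!((un xs ^^ k) x) \<le> xs!((un xs ^^ k) y)"
  using assms(4)
proof (induction k)
  case 0 then show ?case using assms by simp
next
  case (Suc k)
  then have t: "2 \<le> t - k" "k < t" by simp_all
  have h: "(lm xs ^^ k) x \<in> HL xs (t - k)" "(lm xs ^^ k) y \<in> HL xs (t - k)"
     "(un xs ^^ k) x \<in> HL xs (t - k)" "(un xs ^^ k) y \<in> HL xs (t - k)"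
    using iter_HL[OF assms(1) t(2)] iter_HL[OF assms(2) t(2)] by auto
  show ?case unfolding funpow.simps comp_def using lm_mono[OF h(1,2) t(1)] un_mono[OF h(3,4) t(1)] Suc.IH t(2) by simp
qed



lemma inc_RL_gap: "is_inc xs ps \<Longrightarrow> r + d < length ps \<Longrightarrow> RL xs (ps!r) + d \<le> RL xs (ps!(r+d))"
proof (induction d)
  case 0 then show ?case by simp
next
  case (Suc d)
  have a: "ps!(r+d) < ps!(r + Suc d)" using inc_nth_less[OF Suc.prems(1), of "r+d" "r+Suc d"] Suc.prems by simp
  have b: "xs!(ps!(r+d)) \<le> xs!(ps!(r + Suc d))" using inc_nth_le[OF Suc.prems(1), of "r+d" "r+Suc d"] Suc.prems by simp
  have c: "ps!(r + Suc d) < length xs" using inc_bound[OF Suc.prems(1)] Suc.prems(2) by simp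
  show ?case using RL_mono[OF a b c] Suc by simp
qed

lemma inc_RL:
  assumes "is_inc xs ps" "ps \<noteq> []" "last ps = i" "length ps = RL xs i" "r < length ps"
  shows "RL xs (ps!r) = r + 1"
proof -
  have "is_inc xs (take (r+1) ps)" by (rule inc_take[OF assms(1)])
  moreover have "last (take (r+1) ps) = ps!r" using assms by (simp add: last_conv_nth)
  ultimately have "r + 1 \<le> RL xs (ps!r)" using RL_ge[of xs "take (r+1) ps"] assms
    by (fastforce)
  moreover have "RL xs (ps!r) + (length ps - 1 - r) \<le> RL xs (ps!(r + (length ps - 1 - r)))"
    using inc_RL_gap[OF assms(1), of r "length ps - 1 - r"] assms by simp
  moreover have "ps!(r + (length ps - 1 - r)) = i" using assms by (simp add: last_conv_nth)
  ultimately show ?thesis using assms by simp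
qed

lemma part2:
  assumes "i \<in> HL xs t" "is_inc xs ps" "length ps = t" "ps \<noteq> []" "last ps = i" "k < t"
  shows "(lm xs ^^ k) i \<in> HL xs (t - k) \<and> ps ! (t - 1 - k) \<in> HL xs (t - k) \<and>
          (un xs ^^ k) i \<in> HL xs (t - k) \<and>
          xs ! (ps ! (t - 1 - k)) \<le> xs ! ((lm xs ^^ k) i) \<and>
          xs ! ((un xs ^^ k) i) \<le> xs ! (ps ! (t - 1 - k))"
proof -
  have RLi: "RL xs i = t" using assms(1) by (simp add: HL_iff)
  have mem: "ps ! (t - 1 - k') \<in> HL xs (t - k')" if "k' < t" for k'
    using inc_RL[OF assms(2,4,5), of "t-1-k'"] inc_bound[OF assms(2), of "t-1-k'"] that assms(3) RLi
    by (simp add: HL_iff)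
  have "xs ! (ps ! (t - 1 - k)) \<le> xs ! ((lm xs ^^ k) i) \<and>
          xs ! ((un xs ^^ k) i) \<le> xs ! (ps ! (t - 1 - k))"
    using assms(6)
  proof (induction k)
    case 0 then show ?case using assms by (simp add: last_conv_nth)
  next
    case (Suc k)
    define q where "q = ps ! (t - 1 - k)"
    define p where "p = ps ! (t - 1 - Suc k)"
    have t2: "2 \<le> t - k" and kt: "k < t" using Suc.prems by simp_all
    have e: "t - 1 - k = (t - 1 - Suc k) + 1" using Suc.prems by simp
    have pq: "p < q" unfolding p_def q_def e using inc_nth_less[OF assms(2)] assms(3) Suc.prems by simp
    have pq2: "xs!p \<le> xs!q" unfolding p_def q_def e using inc_nth_le[OF assms(2)] assms(3) Suc.prems by simp
    have qH: "q \<in> HL xs (t - k)" unfolding q_def using mem[OF kt] .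
    have pH: "p \<in> HL xs (t - Suc k)" unfolding p_def using mem[OF Suc.prems] .
    then have RLp: "RL xs p = t - k - 1" by (simp add: HL_iff)
    have h: "(lm xs ^^ k) i \<in> HL xs (t - k)" "(un xs ^^ k) i \<in> HL xs (t - k)"
      using iter_HL[OF assms(1) kt] by auto
    have IH: "xs ! q \<le> xs ! ((lm xs ^^ k) i)" "xs ! ((un xs ^^ k) i) \<le> xs ! q"
      using Suc.IH kt unfolding q_def by auto
    have "xs!p \<le> xs!(lm xs ((lm xs ^^ k) i))" using lm_E[OF qH h(1) t2 IH(1) pq pq2 RLp] .
    moreover have "xs!(un xs ((un xs ^^ k) i)) \<le> xs!p" using un_E[OF qH h(2) t2 IH(2) pq RLp] .
    ultimately show ?case unfolding p_def by simp
  qed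
  then show ?thesis using iter_HL[OF assms(1,6)] mem[OF assms(6)] by simp
qed

lemma anti_less: "(\<And>k. Suc k < n \<Longrightarrow> g (Suc k) < (g k :: nat)) \<Longrightarrow> a < b \<Longrightarrow> b < n \<Longrightarrow> g b < g a"
proof (induction b)
  case 0 then show ?case by simp
next
  case (Suc b)
  then show ?case by (cases "a = b") (auto intro: less_trans)
qed

lemma anti_le: "(\<And>k. Suc k < n \<Longrightarrow> g (Suc k) \<le> (g k :: real)) \<Longrightarrow> a \<le> b \<Longrightarrow> b < n \<Longrightarrow> g b \<le> g a"
proof (induction b)
  case 0 then show ?case by simp
next
  case (Suc b)
  then show ?case by (cases "a = Suc b") (auto intro: order_trans)
qed

lemma chain_nth: "r < n \<Longrightarrow> chain f n i ! r = (f ^^ (n - 1 - r)) i"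
  by (simp add: chain_def)

lemma chain_length[simp]: "length (chain f n i) = n"
  by (simp add: chain_def)

lemma chain_inc:
  assumes "\<And>k. Suc k < n \<Longrightarrow> (f^^Suc k) i < (f^^k) i \<and> xs!((f^^Suc k) i) \<le> xs!((f^^k) i)"
    "\<And>k. k < n \<Longrightarrow> (f^^k) i < length xs"
  shows "is_inc xs (chain f n i)"
proof -
  have s1: "sorted_wrt (<) (chain f n i)"
    unfolding sorted_wrt_iff_nth_less
  proof (intro allI impI)
    fix r s assume "r < s" "s < length (chain f n i)"
    then show "chain f n i ! r < chain f n i ! s"
      using anti_less[of n "\<lambda>k. (f^^k) i" "n - 1 - s" "n - 1 - r"] assms(1) by (simp add: chain_nth)
  qed
  have s2: "sorted (map (\<lambda>p. xs!p) (chain f n i))"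
    unfolding sorted_iff_nth_mono
  proof (intro allI impI)
    fix r s assume "r \<le> s" "s < length (map (\<lambda>p. xs!p) (chain f n i))"
    then show "map (\<lambda>p. xs!p) (chain f n i) ! r \<le> map (\<lambda>p. xs!p) (chain f n i) ! s"
      using anti_le[of n "\<lambda>k. xs!((f^^k) i)" "n - 1 - s" "n - 1 - r"] assms(1) by (simp add: chain_nth)
  qed
  have s3: "\<forall>p\<in>set (chain f n i). p < length xs"
    using assms(2) by (auto simp: chain_def)
  show ?thesis using s1 s2 s3 by (simp add: is_inc_def)
qed

lemma weight_le: "length ps = length qs \<Longrightarrow> (\<And>r. r < length ps \<Longrightarrow> xs!(ps!r) \<le> xs!(qs!r)) \<Longrightarrow> weight xs ps \<le> weight xs qs"
  unfolding weight_def sum_list_sum_nth by (auto intro: sum_mono)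



lemma chains_inc:
  assumes "i \<in> HL xs t"
  shows "is_inc xs (chain (lm xs) t i) \<and> is_inc xs (chain (un xs) t i)"
proof -
  have h: "(lm xs ^^ k) i \<in> HL xs (t - k) \<and> (un xs ^^ k) i \<in> HL xs (t - k)" if "k < t" for k
    using iter_HL[OF assms that] .
  show ?thesis
  proof
    show "is_inc xs (chain (lm xs) t i)"
    proof (rule chain_inc)
      fix k assume k: "Suc k < t"
      then have "(lm xs ^^ k) i < length xs" "RL xs ((lm xs ^^ k) i) = t - k" "2 \<le> t - k"
        using h[of k] by (auto simp: HL_iff)
      then show "(lm xs ^^ Suc k) i < (lm xs ^^ k) i \<and> xs ! (lm xs ^^ Suc k) i \<le> xs ! (lm xs ^^ k) i"
        using lm_props[of "(lm xs ^^ k) i" xs] by simp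
    next
      fix k assume "k < t" then show "(lm xs ^^ k) i < length xs" using h[of k] by (simp add: HL_iff)
    qed
    show "is_inc xs (chain (un xs) t i)"
    proof (rule chain_inc)
      fix k assume k: "Suc k < t"
      then have "(un xs ^^ k) i < length xs" "RL xs ((un xs ^^ k) i) = t - k" "2 \<le> t - k"
        using h[of k] by (auto simp: HL_iff)
      then show "(un xs ^^ Suc k) i < (un xs ^^ k) i \<and> xs ! (un xs ^^ Suc k) i \<le> xs ! (un xs ^^ k) i"
        using un_props[of "(un xs ^^ k) i" xs] by simp
    next
      fix k assume "k < t" then show "(un xs ^^ k) i < length xs" using h[of k] by (simp add: HL_iff)
    qed
  qed
qed

lemma chain_last: "0 < n \<Longrightarrow> last (chain f n i) = i"
proof -
  assume n: "0 < n"
  have "chain f n i \<noteq> []" using n by (metis chain_length length_0_conv less_irrefl)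
  then show ?thesis using n by (simp add: last_conv_nth chain_nth)
qed

lemma chain_hd: "0 < n \<Longrightarrow> hd (chain f n i) = (f ^^ (n - 1)) i"
proof -
  assume n: "0 < n"
  have "chain f n i \<noteq> []" using n by (metis chain_length length_0_conv less_irrefl)
  then show ?thesis using n by (simp add: hd_conv_nth chain_nth)
qed

lemma part3:
  assumes "i \<in> HL xs t"
  shows "let L = chain (lm xs) t i; U = chain (un xs) t i in
        is_inc xs L \<and> length L = RL xs i \<and> L \<noteq> [] \<and> last L = i \<and>
        is_inc xs U \<and> length U = RL xs i \<and> U \<noteq> [] \<and> last U = i \<and>
        (\<forall>ps. is_inc xs ps \<and> ps \<noteq> [] \<and> last ps = i \<and> length ps = RL xs i \<longrightarrow>
           weight xs ps \<le> weight xs L \<and> gap xs L \<le> gap xs ps \<and>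
           weight xs U \<le> weight xs ps \<and> gap xs ps \<le> gap xs U)"
proof -
  have RLi: "RL xs i = t" and il: "i < length xs" using assms by (auto simp: HL_iff)
  have t1: "0 < t" using RL_pos[OF il] RLi by simp
  have ne: "chain f t i \<noteq> []" for f using t1 by (metis chain_length length_0_conv less_irrefl)
  have W: "weight xs ps \<le> weight xs (chain (lm xs) t i) \<and> gap xs (chain (lm xs) t i) \<le> gap xs ps \<and>
           weight xs (chain (un xs) t i) \<le> weight xs ps \<and> gap xs ps \<le> gap xs (chain (un xs) t i)"
    if ps: "is_inc xs ps" "ps \<noteq> []" "last ps = i" "length ps = RL xs i" for ps
  proof -
    have P: "xs ! (ps ! (t - 1 - k)) \<le> xs ! ((lm xs ^^ k) i) \<and>
          xs ! ((un xs ^^ k) i) \<le> xs ! (ps ! (t - 1 - k))" if "k < t" for k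
      using part2[OF assms ps(1) _ ps(2,3) that] ps(4) RLi by simp
    have Q: "xs ! (ps ! r) \<le> xs ! ((lm xs ^^ (t - 1 - r)) i) \<and>
          xs ! ((un xs ^^ (t - 1 - r)) i) \<le> xs ! (ps ! r)" if "r < t" for r
      using P[of "t - 1 - r"] that by simp
    have w1: "weight xs ps \<le> weight xs (chain (lm xs) t i)"
      by (rule weight_le) (use ps RLi Q in \<open>auto simp: chain_nth\<close>)
    have w2: "weight xs (chain (un xs) t i) \<le> weight xs ps"
      by (rule weight_le) (use ps RLi Q in \<open>auto simp: chain_nth\<close>)
    have h0: "hd ps = ps ! 0" using ps(2) by (simp add: hd_conv_nth)
    have g: "xs ! (ps ! 0) \<le> xs ! ((lm xs ^^ (t - 1)) i) \<and> xs ! ((un xs ^^ (t - 1)) i) \<le> xs ! (ps ! 0)"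
      using Q[of 0] t1 by simp
    show ?thesis using w1 w2 g t1 ps(3) h0 by (simp add: gap_def chain_last chain_hd)
  qed
  show ?thesis unfolding Let_def using chains_inc[OF assms] RLi t1 ne W by (simp add: chain_last)
qed

lemma num_lists_prop:
  assumes "xs \<noteq> []"
  shows "HL xs (num_lists xs) \<noteq> {} \<and> (\<forall>j<length xs. RL xs j \<le> num_lists xs)"
proof -
  define M where "M = Max (RL xs ` {..<length xs})"
  have fin: "finite (RL xs ` {..<length xs})" by simp
  have "0 \<in> {..<length xs}" using assms by simp
  then have ne: "RL xs ` {..<length xs} \<noteq> {}" by blast
  have Mle: "\<forall>j<length xs. RL xs j \<le> M" unfolding M_def using fin by auto
  obtain e where e: "e < length xs" "RL xs e = M" unfolding M_def using Max_in[OF fin ne] by auto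
  obtain ps where ps: "is_inc xs ps" "ps \<noteq> []" "last ps = e" "length ps = RL xs e"
    using RL_wit[OF e(1)] by auto
  have S: "{t. HL xs t \<noteq> {}} = {1..M}"
  proof
    show "{t. HL xs t \<noteq> {}} \<subseteq> {1..M}"
      using Mle RL_pos by (fastforce simp: HL_def)
    show "{1..M} \<subseteq> {t. HL xs t \<noteq> {}}"
    proof
      fix t assume t: "t \<in> {1..M}"
      then have "RL xs (ps!(t-1)) = t" using inc_RL[OF ps, of "t-1"] e ps(4) by auto
      moreover have "ps!(t-1) < length xs" using inc_bound[OF ps(1), of "t-1"] t ps e by auto
      ultimately show "t \<in> {t. HL xs t \<noteq> {}}" by (auto simp: HL_def)
    qed
  qed
  have "num_lists xs = M" unfolding num_lists_def S by simp
  then show ?thesis using e Mle by (auto simp: HL_def)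
qed

theorem theorem6:
  fixes xs :: "real list" and m :: nat
  assumes m_def: "m = num_lists xs"
  shows
   "(\<forall>t i j. i \<in> HL xs t \<and> j \<in> HL xs t \<and> xs ! i < xs ! j \<longrightarrow>
       (\<forall>k. 1 \<le> k \<and> k < t \<longrightarrow>
          (lm xs ^^ k) i \<in> HL xs (t - k) \<and> (lm xs ^^ k) j \<in> HL xs (t - k) \<and>
          (un xs ^^ k) i \<in> HL xs (t - k) \<and> (un xs ^^ k) j \<in> HL xs (t - k) \<and>
          xs ! ((lm xs ^^ k) i) \<le> xs ! ((lm xs ^^ k) j) \<and>
          xs ! ((un xs ^^ k) i) \<le> xs ! ((un xs ^^ k) j)))
  \<and> (\<forall>t i ps. i \<in> HL xs t \<and> is_inc xs ps \<and> length ps = t \<and> ps \<noteq> [] \<and> last ps = i \<longrightarrow>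
       (\<forall>k. k \<le> t - 1 \<longrightarrow>
          (lm xs ^^ k) i \<in> HL xs (t - k) \<and> ps ! (t - 1 - k) \<in> HL xs (t - k) \<and>
          (un xs ^^ k) i \<in> HL xs (t - k) \<and>
          xs ! ((lm xs ^^ k) i) \<ge> xs ! (ps ! (t - 1 - k)) \<and>
          xs ! (ps ! (t - 1 - k)) \<ge> xs ! ((un xs ^^ k) i)))
  \<and> (\<forall>i. i \<in> HL xs m \<longrightarrow>
       (let L = chain (lm xs) m i; U = chain (un xs) m i in
        is_inc xs L \<and> length L = RL xs i \<and> L \<noteq> [] \<and> last L = i \<and>
        is_inc xs U \<and> length U = RL xs i \<and> U \<noteq> [] \<and> last U = i \<and>
        (\<forall>ps. is_inc xs ps \<and> ps \<noteq> [] \<and> last ps = i \<and> length ps = RL xs i \<longrightarrow>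
           weight xs ps \<le> weight xs L \<and> gap xs L \<le> gap xs ps \<and>
           weight xs U \<le> weight xs ps \<and> gap xs ps \<le> gap xs U)))
  \<and> (xs \<noteq> [] \<longrightarrow>
       (let L = chain (lm xs) m (Min (HL xs m)); U = chain (un xs) m (Max (HL xs m)) in
        is_lis xs L \<and> is_lis xs U \<and>
        (\<forall>ps. is_lis xs ps \<longrightarrow> weight xs ps \<le> weight xs L \<and> weight xs U \<le> weight xs ps)))"
proof (intro conjI)
  show "\<forall>t i j. i \<in> HL xs t \<and> j \<in> HL xs t \<and> xs ! i < xs ! j \<longrightarrow>
       (\<forall>k. 1 \<le> k \<and> k < t \<longrightarrow>
          (lm xs ^^ k) i \<in> HL xs (t - k) \<and> (lm xs ^^ k) j \<in> HL xs (t - k) \<and>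
          (un xs ^^ k) i \<in> HL xs (t - k) \<and> (un xs ^^ k) j \<in> HL xs (t - k) \<and>
          xs ! ((lm xs ^^ k) i) \<le> xs ! ((lm xs ^^ k) j) \<and>
          xs ! ((un xs ^^ k) i) \<le> xs ! ((un xs ^^ k) j))"
  proof (intro allI impI)
    fix t i j k assume a: "i \<in> HL xs t \<and> j \<in> HL xs t \<and> xs ! i < xs ! j" "1 \<le> k \<and> k < t"
    then have "xs!i \<le> xs!j" by simp
    then show "(lm xs ^^ k) i \<in> HL xs (t - k) \<and> (lm xs ^^ k) j \<in> HL xs (t - k) \<and>
          (un xs ^^ k) i \<in> HL xs (t - k) \<and> (un xs ^^ k) j \<in> HL xs (t - k) \<and>
          xs ! ((lm xs ^^ k) i) \<le> xs ! ((lm xs ^^ k) j) \<and>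
          xs ! ((un xs ^^ k) i) \<le> xs ! ((un xs ^^ k) j)"
      using iter_HL[of i xs t k] iter_HL[of j xs t k] iter_mono[of i xs t j k] a by blast
  qed
  show "\<forall>t i ps. i \<in> HL xs t \<and> is_inc xs ps \<and> length ps = t \<and> ps \<noteq> [] \<and> last ps = i \<longrightarrow>
       (\<forall>k. k \<le> t - 1 \<longrightarrow>
          (lm xs ^^ k) i \<in> HL xs (t - k) \<and> ps ! (t - 1 - k) \<in> HL xs (t - k) \<and>
          (un xs ^^ k) i \<in> HL xs (t - k) \<and>
          xs ! ((lm xs ^^ k) i) \<ge> xs ! (ps ! (t - 1 - k)) \<and>
          xs ! (ps ! (t - 1 - k)) \<ge> xs ! ((un xs ^^ k) i))"
  proof (intro allI impI)
    fix t i ps k assume a: "i \<in> HL xs t \<and> is_inc xs ps \<and> length ps = t \<and> ps \<noteq> [] \<and> last ps = i" "k \<le> t - 1"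
    then have "k < t" by (cases ps) auto
    then show "(lm xs ^^ k) i \<in> HL xs (t - k) \<and> ps ! (t - 1 - k) \<in> HL xs (t - k) \<and>
          (un xs ^^ k) i \<in> HL xs (t - k) \<and>
          xs ! ((lm xs ^^ k) i) \<ge> xs ! (ps ! (t - 1 - k)) \<and>
          xs ! (ps ! (t - 1 - k)) \<ge> xs ! ((un xs ^^ k) i)"
      using part2[of i xs t ps k] a by blast
  qed
  show "\<forall>i. i \<in> HL xs m \<longrightarrow>
       (let L = chain (lm xs) m i; U = chain (un xs) m i in
        is_inc xs L \<and> length L = RL xs i \<and> L \<noteq> [] \<and> last L = i \<and>
        is_inc xs U \<and> length U = RL xs i \<and> U \<noteq> [] \<and> last U = i \<and>
        (\<forall>ps. is_inc xs ps \<and> ps \<noteq> [] \<and> last ps = i \<and> length ps = RL xs i \<longrightarrow>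
           weight xs ps \<le> weight xs L \<and> gap xs L \<le> gap xs ps \<and>
           weight xs U \<le> weight xs ps \<and> gap xs ps \<le> gap xs U))"
    using part3 by blast
  show "xs \<noteq> [] \<longrightarrow>
       (let L = chain (lm xs) m (Min (HL xs m)); U = chain (un xs) m (Max (HL xs m)) in
        is_lis xs L \<and> is_lis xs U \<and>
        (\<forall>ps. is_lis xs ps \<longrightarrow> weight xs ps \<le> weight xs L \<and> weight xs U \<le> weight xs ps))"
  proof
    assume xne: "xs \<noteq> []"
    have NL: "HL xs m \<noteq> {}" "\<forall>j<length xs. RL xs j \<le> m" using num_lists_prop[OF xne] m_def by auto
    have fin: "finite (HL xs m)" by (rule finite_subset[of _ "{..<length xs}"]) (auto simp: HL_def)
    define a where "a = Min (HL xs m)"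
    define b where "b = Max (HL xs m)"
    have aH: "a \<in> HL xs m" unfolding a_def using Min_in[OF fin NL(1)] .
    have bH: "b \<in> HL xs m" unfolding b_def using Max_in[OF fin NL(1)] .
    have m1: "0 < m" using aH RL_pos[of a xs] by (auto simp: HL_iff)
    have bound: "length qs \<le> m" if "is_inc xs qs" for qs
    proof (cases "qs = []")
      case True then show ?thesis by simp
    next
      case False
      have "last qs < length xs" using inc_bound[OF that, of "length qs - 1"] False by (simp add: last_conv_nth)
      then show ?thesis using RL_ge[OF that False refl] NL(2) by fastforce
    qed
    have L3: "is_inc xs (chain (lm xs) m a) \<and> is_inc xs (chain (un xs) m b)"
      using chains_inc[OF aH] chains_inc[OF bH] by blast
    have lisL: "is_lis xs (chain (lm xs) m a)" and lisU: "is_lis xs (chain (un xs) m b)"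
      using L3 bound by (auto simp: is_lis_def)
    have W: "weight xs ps \<le> weight xs (chain (lm xs) m a) \<and> weight xs (chain (un xs) m b) \<le> weight xs ps"
      if ps: "is_lis xs ps" for ps
    proof -
      have pi: "is_inc xs ps" using ps by (simp add: is_lis_def)
      have "m \<le> length ps" using ps lisL by (auto simp: is_lis_def)
      then have lp: "length ps = m" using bound[OF pi] by simp
      then have pne: "ps \<noteq> []" using m1 by auto
      define e where "e = last ps"
      have el: "e < length xs" using inc_bound[OF pi, of "length ps - 1"] pne by (simp add: e_def last_conv_nth)
      have "m \<le> RL xs e" using RL_ge[OF pi pne] lp by (simp add: e_def)
      then have eH: "e \<in> HL xs m" using NL(2) el by (force simp: HL_iff)
      have "a \<le> e" unfolding a_def using Min_le[OF fin eH] .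
      then have ea: "xs!e \<le> xs!a" using HL_D[OF eH aH] by simp
      have "e \<le> b" unfolding b_def using Max_ge[OF fin eH] .
      then have be: "xs!b \<le> xs!e" using HL_D[OF bH eH] by simp
      have Q: "xs ! (ps ! r) \<le> xs ! ((lm xs ^^ (m - 1 - r)) a) \<and>
          xs ! ((un xs ^^ (m - 1 - r)) b) \<le> xs ! (ps ! r)" if r: "r < m" for r
      proof -
        have k: "m - 1 - r < m" using r by simp
        have P: "xs ! (ps ! (m - 1 - (m - 1 - r))) \<le> xs ! ((lm xs ^^ (m - 1 - r)) e) \<and>
          xs ! ((un xs ^^ (m - 1 - r)) e) \<le> xs ! (ps ! (m - 1 - (m - 1 - r)))"
          using part2[OF eH pi lp pne e_def[symmetric] k] by simp
        have i1: "xs ! ((lm xs ^^ (m - 1 - r)) e) \<le> xs ! ((lm xs ^^ (m - 1 - r)) a)"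
          using iter_mono[OF eH aH ea k] by simp
        have i2: "xs ! ((un xs ^^ (m - 1 - r)) b) \<le> xs ! ((un xs ^^ (m - 1 - r)) e)"
          using iter_mono[OF bH eH be k] by simp
        have "m - 1 - (m - 1 - r) = r" using r by simp
        then show ?thesis using P i1 i2 by simp
      qed
      have w1: "weight xs ps \<le> weight xs (chain (lm xs) m a)"
        by (rule weight_le) (use lp Q in \<open>auto simp: chain_nth\<close>)
      have w2: "weight xs (chain (un xs) m b) \<le> weight xs ps"
        by (rule weight_le) (use lp Q in \<open>auto simp: chain_nth\<close>)
      show ?thesis using w1 w2 by simp
    qed
    show "let L = chain (lm xs) m (Min (HL xs m)); U = chain (un xs) m (Max (HL xs m)) in
        is_lis xs L \<and> is_lis xs U \<and>
        (\<forall>ps. is_lis xs ps \<longrightarrow> weight xs ps \<le> weight xs L \<and> weight xs U \<le> weight xs ps)"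
      unfolding Let_def a_def[symmetric] b_def[symmetric] using lisL lisU W by blast
  qed
qed

end
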